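(* Let $z_n$ be bounded in $W^{1,2}(\Omega;\mathbb{R}^m)$ with $\{|\nabla z_n|^2\}$ equiintegrable. Let $\alpha_n>0$ with $\alpha_n\to0$ and $\alpha_n\nabla z_n$ bounded in $L^\infty$. Suppose $\{\nabla z_n\}$ generates the Young measure $\nu=\{\nu_x\}_{x\in\Omega}$, and set $m(x)=\int_{\mathbb{R}^{m\times d}}|F|^2d\nu_x(F)$. Then there is a subsequence (not relabeled) such that $$\mathcal F(x,\alpha_n,\nabla z_n)\rightharpoonup U(x,0)m(x)+\tfrac12\int_{\mathbb{R}^{m\times d}}(\mathsf L(x)F,F)\,d\nu_x(F)$$ weakly in $L^1(\Omega)$.
   Context: $\Omega\subset\mathbb{R}^d$ is a bounded domain with $C^1$ boundary. $(A,B)=\mathrm{tr}(AB^T)$ and $|\cdot|$ is the Frobenius norm. $U:\overline\Omega\times\mathbb{R}^{m\times d}\to\mathbb{R}$ is continuous, and $\mathsf L$ is a continuous fourth-order tensor field on $\overline\Omega$. $\mathcal F(x,\alpha,G)=U(x,\alpha G)|G|^2+\tfrac12(\mathsf L(x)G,G)$. *)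

theory Defs
  imports "HOL-Analysis.Analysis" "HOL-Probability.Probability"
begin

abbreviation leb_on :: "'a::euclidean_space set \<Rightarrow> 'a measure" where
  "leb_on \<Omega> \<equiv> restrict_space lebesgue \<Omega>"

coinductive smooth_fun :: "('a::real_normed_vector \<Rightarrow> real) \<Rightarrow> bool" where
  "(\<forall>x. \<phi> differentiable (at x)) \<Longrightarrow>
   (\<forall>v. smooth_fun (\<lambda>x. frechet_derivative \<phi> (at x) v)) \<Longrightarrow> smooth_fun \<phi>"

definition test_fun :: "'a::euclidean_space set \<Rightarrow> ('a \<Rightarrow> real) \<Rightarrow> bool" where
  "test_fun \<Omega> \<phi> \<longleftrightarrow> smooth_fun \<phi> \<and> compact (closure {x. \<phi> x \<noteq> 0})
      \<and> closure {x. \<phi> x \<noteq> 0} \<subseteq> \<Omega>"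

text \<open>Bounded domain with C^1 boundary (local level-set description).\<close>
definition C1_boundary :: "'a::euclidean_space set \<Rightarrow> bool" where
  "C1_boundary \<Omega> \<longleftrightarrow> (\<forall>p\<in>frontier \<Omega>. \<exists>r>0. \<exists>\<phi>::'a \<Rightarrow> real.
      (\<forall>x\<in>ball p r. \<phi> differentiable (at x))
    \<and> (\<forall>v. continuous_on (ball p r) (\<lambda>x. frechet_derivative \<phi> (at x) v))
    \<and> frechet_derivative \<phi> (at p) \<noteq> (\<lambda>v. 0)
    \<and> \<Omega> \<inter> ball p r = {x\<in>ball p r. \<phi> x < 0})"

definition bounded_C1_domain :: "'a::euclidean_space set \<Rightarrow> bool" where
  "bounded_C1_domain \<Omega> \<longleftrightarrow> open \<Omega> \<and> connected \<Omega> \<and> \<Omega> \<noteq> {} \<and> bounded \<Omega> \<and> C1_boundary \<Omega>"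

text \<open>G is the weak gradient of z on Omega: (G x)\$i\$j is the weak derivative
  of the i-th component of z in direction j.\<close>
definition weak_gradient ::
  "(real^'d) set \<Rightarrow> (real^'d \<Rightarrow> real^'m) \<Rightarrow> (real^'d \<Rightarrow> real^'d^'m) \<Rightarrow> bool" where
  "weak_gradient \<Omega> z G \<longleftrightarrow> (\<forall>\<phi>. test_fun \<Omega> \<phi> \<longrightarrow> (\<forall>i j.
      (\<integral>x. (z x $ i) * frechet_derivative \<phi> (at x) (axis j 1) \<partial>leb_on \<Omega>)
      = - (\<integral>x. (G x $ i $ j) * \<phi> x \<partial>leb_on \<Omega>)))"

definition W12 ::
  "(real^'d) set \<Rightarrow> (real^'d \<Rightarrow> real^'m) \<Rightarrow> (real^'d \<Rightarrow> real^'d^'m) \<Rightarrow> bool" where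
  "W12 \<Omega> z G \<longleftrightarrow> z \<in> borel_measurable (leb_on \<Omega>) \<and> G \<in> borel_measurable (leb_on \<Omega>)
     \<and> integrable (leb_on \<Omega>) (\<lambda>x. norm (z x) ^ 2)
     \<and> integrable (leb_on \<Omega>) (\<lambda>x. norm (G x) ^ 2)
     \<and> weak_gradient \<Omega> z G"

definition Linfty :: "'a::euclidean_space set \<Rightarrow> ('a \<Rightarrow> real) \<Rightarrow> bool" where
  "Linfty \<Omega> g \<longleftrightarrow> g \<in> borel_measurable (leb_on \<Omega>)
     \<and> (\<exists>C. AE x in leb_on \<Omega>. \<bar>g x\<bar> \<le> C)"

definition equiintegrable :: "'a::euclidean_space set \<Rightarrow> (nat \<Rightarrow> 'a \<Rightarrow> real) \<Rightarrow> bool" where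
  "equiintegrable \<Omega> f \<longleftrightarrow> (\<forall>n. integrable (leb_on \<Omega>) (f n)) \<and>
     (\<forall>e>0. \<exists>\<delta>>0. \<forall>n. \<forall>E. E \<in> sets lebesgue \<and> E \<subseteq> \<Omega> \<and> measure lebesgue E < \<delta>
        \<longrightarrow> (\<integral>x. \<bar>f n x\<bar> \<partial>leb_on E) < e)"

definition generates_YM ::
  "'a::euclidean_space set \<Rightarrow> (nat \<Rightarrow> 'a \<Rightarrow> 'b::euclidean_space) \<Rightarrow> ('a \<Rightarrow> 'b measure) \<Rightarrow> bool" where
  "generates_YM \<Omega> V \<nu> \<longleftrightarrow>
     (\<forall>x\<in>\<Omega>. prob_space (\<nu> x) \<and> sets (\<nu> x) = sets borel)
   \<and> (\<forall>f::'b \<Rightarrow> real. continuous_on UNIV f \<and> (f \<longlongrightarrow> 0) at_infinity \<longrightarrow>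
        (\<lambda>x. \<integral>F. f F \<partial>\<nu> x) \<in> borel_measurable (leb_on \<Omega>)
      \<and> (\<forall>g. integrable (leb_on \<Omega>) g \<longrightarrow>
          (\<lambda>n. \<integral>x. g x * f (V n x) \<partial>leb_on \<Omega>)
            \<longlonglongrightarrow> (\<integral>x. g x * (\<integral>F. f F \<partial>\<nu> x) \<partial>leb_on \<Omega>)))"

definition weak_L1_conv :: "'a::euclidean_space set \<Rightarrow> (nat \<Rightarrow> 'a \<Rightarrow> real) \<Rightarrow> ('a \<Rightarrow> real) \<Rightarrow> bool" where
  "weak_L1_conv \<Omega> f h \<longleftrightarrow> (\<forall>n. integrable (leb_on \<Omega>) (f n)) \<and> integrable (leb_on \<Omega>) h
     \<and> (\<forall>g. Linfty \<Omega> g \<longrightarrow>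
          (\<lambda>n. \<integral>x. g x * f n x \<partial>leb_on \<Omega>) \<longlonglongrightarrow> (\<integral>x. g x * h x \<partial>leb_on \<Omega>))"

definition calF ::
  "(real^'d \<Rightarrow> real^'d^'m \<Rightarrow> real) \<Rightarrow> (real^'d \<Rightarrow> ((real^'d^'m) \<Rightarrow>\<^sub>L (real^'d^'m)))
    \<Rightarrow> real^'d \<Rightarrow> real \<Rightarrow> real^'d^'m \<Rightarrow> real" where
  "calF U L x \<alpha> G = U x (\<alpha> *\<^sub>R G) * (norm G)\<^sup>2 + 1/2 * (blinfun_apply (L x) G \<bullet> G)"

end

theory Submission
  imports Defs
begin
definition chi :: "nat \<Rightarrow> 'b::real_normed_vector \<Rightarrow> real" where
  "chi k F = max 0 (min 1 (real k + 1 - norm F))"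

lemma tri3: "\<bar>a - b\<bar> < e / 3 \<Longrightarrow> \<bar>b - c\<bar> < e / 3 \<Longrightarrow> \<bar>c - d\<bar> < e / 3 \<Longrightarrow> \<bar>a - d\<bar> < (e::real)"
  by arith

lemma chi_cont: "continuous_on UNIV (chi k)"
  unfolding chi_def by (intro continuous_intros)

lemma chi_ge0: "0 \<le> chi k F" and chi_le1: "chi k F \<le> 1"
  unfolding chi_def by auto

lemma chi_one: "norm F \<le> real k \<Longrightarrow> chi k F = 1"
  unfolding chi_def by auto

lemma chi_zero: "real k + 1 \<le> norm F \<Longrightarrow> chi k F = 0"
  unfolding chi_def by auto

lemma chi_mono: "k \<le> k' \<Longrightarrow> chi k F \<le> chi k' F"
  unfolding chi_def by auto

lemma chi_abs: "\<bar>chi k F\<bar> \<le> 1"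
  using chi_ge0[of k F] chi_le1[of k F] by (simp add: abs_of_nonneg)

lemma chi_lim: "(\<lambda>k. chi k F) \<longlonglongrightarrow> 1"
proof -
  obtain k0 :: nat where "norm F \<le> real k0" using real_arch_simple by blast
  then have "\<forall>\<^sub>F k in sequentially. chi k F = 1"
    by (intro eventually_sequentiallyI[of k0]) (auto intro!: chi_one)
  then show ?thesis by (rule tendsto_eventually)
qed

lemma cut_C0:
  fixes \<phi> :: "'b::real_normed_vector \<Rightarrow> real"
  assumes "continuous_on UNIV \<phi>"
  shows "continuous_on UNIV (\<lambda>F. \<phi> F * chi k F)" and "((\<lambda>F. \<phi> F * chi k F) \<longlongrightarrow> 0) at_infinity"
proof -
  show "continuous_on UNIV (\<lambda>F. \<phi> F * chi k F)"
    using assms chi_cont by (intro continuous_on_mult) auto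
  have "\<forall>\<^sub>F F in at_infinity. \<phi> F * chi k F = 0"
    unfolding eventually_at_infinity by (rule exI[of _ "real k + 1"]) (auto simp: chi_zero)
  then show "((\<lambda>F. \<phi> F * chi k F) \<longlongrightarrow> 0) at_infinity"
    by (simp add: tendsto_eventually)
qed

lemma cut_bounded:
  fixes \<phi> :: "'b::euclidean_space \<Rightarrow> real"
  assumes "continuous_on UNIV \<phi>"
  shows "\<exists>B. \<forall>F. \<bar>\<phi> F * chi k F\<bar> \<le> B"
proof -
  have "compact (\<phi> ` cball 0 (real k + 1))"
    by (intro compact_continuous_image continuous_on_subset[OF assms]) auto
  then obtain B where B: "\<And>y. y \<in> \<phi> ` cball 0 (real k + 1) \<Longrightarrow> \<bar>y\<bar> \<le> B"
    using compact_imp_bounded bounded_iff by (metis real_norm_def)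
  have "\<bar>\<phi> F * chi k F\<bar> \<le> \<bar>B\<bar>" for F
  proof (cases "norm F \<le> real k + 1")
    case True
    then have "\<bar>\<phi> F\<bar> \<le> B" by (intro B) auto
    moreover have "\<bar>chi k F\<bar> \<le> 1" using chi_ge0[of k F] chi_le1[of k F] by simp
    ultimately have "\<bar>\<phi> F\<bar> * \<bar>chi k F\<bar> \<le> B * 1" by (intro mult_mono) auto
    then show ?thesis by (simp add: abs_mult)
  next
    case False then show ?thesis by (simp add: chi_zero)
  qed
  then show ?thesis by blast
qed

definition wc :: "'a measure \<Rightarrow> (nat \<Rightarrow> 'a \<Rightarrow> real) \<Rightarrow> ('a \<Rightarrow> real) \<Rightarrow> bool" where
  "wc M f h \<longleftrightarrow> (\<forall>n. integrable M (f n)) \<and> integrable M h \<and>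
     (\<forall>(g::'a\<Rightarrow>real) (Cg::real). g \<in> borel_measurable M \<longrightarrow> (AE x in M. \<bar>g x\<bar> \<le> Cg) \<longrightarrow>
        (\<lambda>n. \<integral>x. g x * f n x \<partial>M) \<longlonglongrightarrow> (\<integral>x. g x * h x \<partial>M))"

lemma gmult_int:
  fixes g f :: "'a \<Rightarrow> real"
  assumes "g \<in> borel_measurable M" "AE x in M. \<bar>g x\<bar> \<le> Cg" "integrable M f"
  shows "integrable M (\<lambda>x. g x * f x)"
proof (rule Bochner_Integration.integrable_bound[of M "\<lambda>x. \<bar>Cg\<bar> * f x"])
  show "integrable M (\<lambda>x. \<bar>Cg\<bar> * f x)" using assms(3) by simp
  show "(\<lambda>x. g x * f x) \<in> borel_measurable M" using assms(1) borel_measurable_integrable[OF assms(3)] by measurable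
  show "AE x in M. norm (g x * f x) \<le> norm (\<bar>Cg\<bar> * f x)"
    using assms(2) by eventually_elim (auto simp: abs_mult intro!: mult_right_mono)
qed

lemma wc_add:
  assumes "wc M f h" "wc M f' h'"
  shows "wc M (\<lambda>n x. f n x + f' n x) (\<lambda>x. h x + h' x)"
  unfolding wc_def
proof (intro conjI allI impI)
  fix n show "integrable M (\<lambda>x. f n x + f' n x)" using assms unfolding wc_def by auto
  show "integrable M (\<lambda>x. h x + h' x)" using assms unfolding wc_def by auto
  fix g :: "'a \<Rightarrow> real" and Cg :: real assume gm: "g \<in> borel_measurable M" and gb: "AE x in M. \<bar>g x\<bar> \<le> Cg"
  have i: "integrable M (\<lambda>x. g x * f n x)" "integrable M (\<lambda>x. g x * f' n x)"
    "integrable M (\<lambda>x. g x * h x)" "integrable M (\<lambda>x. g x * h' x)" for n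
    using assms gmult_int[OF gm gb] unfolding wc_def by auto
  have "(\<lambda>n. (\<integral>x. g x * f n x \<partial>M) + (\<integral>x. g x * f' n x \<partial>M)) \<longlonglongrightarrow> (\<integral>x. g x * h x \<partial>M) + (\<integral>x. g x * h' x \<partial>M)"
    using assms gm gb unfolding wc_def by (intro tendsto_add) auto
  then show "(\<lambda>n. \<integral>x. g x * (f n x + f' n x) \<partial>M) \<longlonglongrightarrow> (\<integral>x. g x * (h x + h' x) \<partial>M)"
    using i by (simp add: distrib_left)
qed

lemma wc_zero: "wc M (\<lambda>n x. 0) (\<lambda>x. 0)"
  unfolding wc_def by simp

lemma wc_sum:
  assumes "finite I" "\<And>i. i \<in> I \<Longrightarrow> wc M (f i) (h i)"
  shows "wc M (\<lambda>n x. \<Sum>i\<in>I. f i n x) (\<lambda>x. \<Sum>i\<in>I. h i x)"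
  using assms
proof (induction I rule: finite_induct)
  case empty then show ?case using wc_zero by simp
next
  case (insert i I)
  then show ?case using wc_add[of M "f i" "h i" "\<lambda>n x. \<Sum>i\<in>I. f i n x" "\<lambda>x. \<Sum>i\<in>I. h i x"] by simp
qed

lemma wc_mult:
  assumes w: "wc M f h" and um: "u \<in> borel_measurable M" and ub: "AE x in M. \<bar>u x\<bar> \<le> Cu"
  shows "wc M (\<lambda>n x. u x * f n x) (\<lambda>x. u x * h x)"
  unfolding wc_def
proof (intro conjI allI impI)
  fix n show "integrable M (\<lambda>x. u x * f n x)" using w gmult_int[OF um ub] unfolding wc_def by auto
  show "integrable M (\<lambda>x. u x * h x)" using w gmult_int[OF um ub] unfolding wc_def by auto
  fix g :: "'a \<Rightarrow> real" and Cg :: real assume gm: "g \<in> borel_measurable M" and gb: "AE x in M. \<bar>g x\<bar> \<le> Cg"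
  have gm': "(\<lambda>x. g x * u x) \<in> borel_measurable M" using gm um by measurable
  have gb': "AE x in M. \<bar>g x * u x\<bar> \<le> \<bar>Cg\<bar> * \<bar>Cu\<bar>"
    using gb ub by eventually_elim (auto simp: abs_mult intro!: mult_mono)
  have "(\<lambda>n. \<integral>x. (g x * u x) * f n x \<partial>M) \<longlonglongrightarrow> (\<integral>x. (g x * u x) * h x \<partial>M)"
    using w gm' gb' unfolding wc_def by blast
  then show "(\<lambda>n. \<integral>x. g x * (u x * f n x) \<partial>M) \<longlonglongrightarrow> (\<integral>x. g x * (u x * h x) \<partial>M)"
    by (simp add: mult.assoc)
qed

lemma wc_cmult:
  assumes w: "wc M f h"
  shows "wc M (\<lambda>n x. c * f n x) (\<lambda>x. c * h x)"
  using wc_mult[OF w, of "\<lambda>x. c" "\<bar>c\<bar>"] by simp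

lemma wc_cong:
  assumes w: "wc M f h" and eq: "\<And>n x. x \<in> space M \<Longrightarrow> f n x = f' n x"
    and hm: "h' \<in> borel_measurable M" and ae: "AE x in M. h x = h' x"
  shows "wc M f' h'"
  unfolding wc_def
proof (intro conjI allI impI)
  fix n
  have "integrable M (f n)" using w unfolding wc_def by auto
  then show "integrable M (f' n)" using Bochner_Integration.integrable_cong[OF refl, of M "f n" "f' n"] eq by auto
  have hi: "integrable M h" using w unfolding wc_def by auto
  then show "integrable M h'" using integrable_cong_AE[OF borel_measurable_integrable[OF hi] hm ae] by simp
  fix g :: "'a \<Rightarrow> real" and Cg :: real assume gm: "g \<in> borel_measurable M" and gb: "AE x in M. \<bar>g x\<bar> \<le> Cg"
  have "(\<lambda>n. \<integral>x. g x * f n x \<partial>M) \<longlonglongrightarrow> (\<integral>x. g x * h x \<partial>M)"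
    using w gm gb unfolding wc_def by blast
  moreover have "(\<integral>x. g x * f n x \<partial>M) = (\<integral>x. g x * f' n x \<partial>M)" for n
    using eq by (intro Bochner_Integration.integral_cong) auto
  moreover have "(\<integral>x. g x * h x \<partial>M) = (\<integral>x. g x * h' x \<partial>M)"
    using gm hm borel_measurable_integrable[OF hi] ae by (intro integral_cong_AE) auto
  ultimately show "(\<lambda>n. \<integral>x. g x * f' n x \<partial>M) \<longlonglongrightarrow> (\<integral>x. g x * h' x \<partial>M)" by simp
qed

locale ymloc = finite_measure M for M :: "'a measure" +
  fixes V :: "nat \<Rightarrow> 'a \<Rightarrow> 'b::euclidean_space" and \<nu> :: "'a \<Rightarrow> 'b measure" and C :: real
  assumes Vmeas: "\<And>n. V n \<in> borel_measurable M"
   and Vint: "\<And>n. integrable M (\<lambda>x. norm (V n x)^2)"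
   and Vbdd: "\<And>n. (\<integral>x. norm (V n x)^2 \<partial>M) \<le> C"
   and tail: "\<And>e. e>0 \<Longrightarrow> \<exists>k0::nat. \<forall>k\<ge>k0. \<forall>n.
          (\<integral>x. (if real k < norm (V n x) then norm (V n x)^2 else 0) \<partial>M) < e"
   and nuprob: "\<And>x. x \<in> space M \<Longrightarrow> prob_space (\<nu> x)"
   and nusets: "\<And>x. x \<in> space M \<Longrightarrow> sets (\<nu> x) = sets borel"
   and ymeas: "\<And>f::'b\<Rightarrow>real. continuous_on UNIV f \<Longrightarrow> (f \<longlongrightarrow> 0) at_infinity \<Longrightarrow>
          (\<lambda>x. \<integral>F. f F \<partial>\<nu> x) \<in> borel_measurable M"
   and ylim: "\<And>(f::'b\<Rightarrow>real) (g::'a\<Rightarrow>real). continuous_on UNIV f \<Longrightarrow> (f \<longlongrightarrow> 0) at_infinity \<Longrightarrow> integrable M g \<Longrightarrow>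
          (\<lambda>n. \<integral>x. g x * f (V n x) \<partial>M) \<longlonglongrightarrow> (\<integral>x. g x * (\<integral>F. f F \<partial>\<nu> x) \<partial>M)"
begin

lemma nu_meas:
  assumes "x \<in> space M" "continuous_on UNIV (\<phi> :: 'b \<Rightarrow> real)"
  shows "\<phi> \<in> borel_measurable (\<nu> x)"
  by (subst measurable_cong_sets[OF nusets[OF assms(1)] refl]) (rule borel_measurable_continuous_onI[OF assms(2)])

lemma nu_int_bdd:
  assumes "x \<in> space M" "f \<in> borel_measurable (\<nu> x)" "\<And>F. \<bar>f F\<bar> \<le> (B::real)"
  shows "integrable (\<nu> x) f"
proof -
  interpret prob_space "\<nu> x" using nuprob[OF assms(1)] .
  show ?thesis using assms(2,3) by (intro integrable_const_bound[of _ B]) auto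
qed

lemma cut_int:
  assumes "x \<in> space M" "continuous_on UNIV (\<phi> :: 'b \<Rightarrow> real)"
  shows "integrable (\<nu> x) (\<lambda>F. \<phi> F * chi k F)"
proof -
  obtain B where "\<And>F. \<bar>\<phi> F * chi k F\<bar> \<le> B" using cut_bounded[OF assms(2)] by blast
  then show ?thesis using cut_C0(1)[OF assms(2)] assms(1)
    by (intro nu_int_bdd[of x _ B] nu_meas) auto
qed

lemma nn_sup:
  assumes x: "x \<in> space M" and c: "continuous_on UNIV (\<phi> :: 'b \<Rightarrow> real)"
  shows "(\<integral>\<^sup>+F. ennreal \<bar>\<phi> F\<bar> \<partial>\<nu> x) = (SUP k. ennreal (\<integral>F. \<bar>\<phi> F\<bar> * chi k F \<partial>\<nu> x))"
proof -
  have ca: "continuous_on UNIV (\<lambda>F. \<bar>\<phi> F\<bar>)" using c by (intro continuous_intros)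
  define f where "f k F = ennreal (\<bar>\<phi> F\<bar> * chi k F)" for k F
  have inc: "incseq f"
    unfolding f_def incseq_def le_fun_def
    by (auto intro!: ennreal_leI mult_left_mono chi_mono)
  have fm: "f k \<in> borel_measurable (\<nu> x)" for k
    unfolding f_def using nu_meas[OF x cut_C0(1)[OF ca]] by measurable
  have sup: "(SUP k. f k F) = ennreal \<bar>\<phi> F\<bar>" for F
  proof -
    have "(\<lambda>k. f k F) \<longlonglongrightarrow> (SUP k. f k F)"
      using inc by (intro LIMSEQ_SUP) (auto simp: incseq_def le_fun_def)
    moreover have "(\<lambda>k. f k F) \<longlonglongrightarrow> ennreal \<bar>\<phi> F\<bar>"
      unfolding f_def using tendsto_mult[OF tendsto_const chi_lim, of "\<bar>\<phi> F\<bar>" F]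
      by (intro tendsto_ennrealI) simp
    ultimately show ?thesis using LIMSEQ_unique by blast
  qed
  have "(\<integral>\<^sup>+F. ennreal \<bar>\<phi> F\<bar> \<partial>\<nu> x) = (\<integral>\<^sup>+F. (SUP k. f k F) \<partial>\<nu> x)"
    by (simp add: sup)
  also have "\<dots> = (SUP k. integral\<^sup>N (\<nu> x) (f k))"
    by (rule nn_integral_monotone_convergence_SUP[OF inc fm])
  also have "\<dots> = (SUP k. ennreal (\<integral>F. \<bar>\<phi> F\<bar> * chi k F \<partial>\<nu> x))"
    unfolding f_def
    by (intro SUP_cong refl nn_integral_eq_integral cut_int[OF x ca]) (auto intro!: AE_I2 simp: chi_ge0)
  finally show ?thesis .
qed

lemma Phi_meas:
  assumes c: "continuous_on UNIV (\<phi> :: 'b \<Rightarrow> real)"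
  shows "(\<lambda>x. \<integral>F. \<phi> F \<partial>\<nu> x) \<in> borel_measurable M"
proof -
  have ca: "continuous_on UNIV (\<lambda>F. \<bar>\<phi> F\<bar>)" using c by (intro continuous_intros)
  define G where "G x = (SUP k. ennreal (\<integral>F. \<bar>\<phi> F\<bar> * chi k F \<partial>\<nu> x))" for x
  have ym: "(\<lambda>x. \<integral>F. \<bar>\<phi> F\<bar> * chi k F \<partial>\<nu> x) \<in> borel_measurable M" for k
    using ymeas[OF cut_C0(1)[OF ca, of k] cut_C0(2)[OF ca, of k]] .
  have Gm: "G \<in> borel_measurable M"
    unfolding G_def using ym by measurable
  define S where "S = {x \<in> space M. G x < \<infinity>}"
  have Sm: "S \<in> sets M" unfolding S_def using Gm by measurable
  have intS: "integrable (\<nu> x) \<phi> \<longleftrightarrow> x \<in> S" if x: "x \<in> space M" for x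
    using nn_sup[OF x c] nu_meas[OF x c] x unfolding S_def G_def integrable_iff_bounded
    by auto
  define u where "u k x = indicator S x * (\<integral>F. \<phi> F * chi k F \<partial>\<nu> x)" for k x
  have um: "u k \<in> borel_measurable M" for k
    unfolding u_def using ymeas[OF cut_C0(1)[OF c, of k] cut_C0(2)[OF c, of k]] Sm by measurable
  have lim: "(\<lambda>k. u k x) \<longlonglongrightarrow> (\<integral>F. \<phi> F \<partial>\<nu> x)" if x: "x \<in> space M" for x
  proof (cases "x \<in> S")
    case True
    then have ii: "integrable (\<nu> x) \<phi>" using intS[OF x] by simp
    have "(\<lambda>k. \<integral>F. \<phi> F * chi k F \<partial>\<nu> x) \<longlonglongrightarrow> (\<integral>F. \<phi> F \<partial>\<nu> x)"
    proof (rule integral_dominated_convergence[where w="\<lambda>F. \<bar>\<phi> F\<bar>"])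
      show "\<phi> \<in> borel_measurable (\<nu> x)" using nu_meas[OF x c] .
      show "(\<lambda>F. \<phi> F * chi k F) \<in> borel_measurable (\<nu> x)" for k
        using nu_meas[OF x cut_C0(1)[OF c]] .
      show "integrable (\<nu> x) (\<lambda>F. \<bar>\<phi> F\<bar>)" using ii by auto
      show "AE F in \<nu> x. (\<lambda>k. \<phi> F * chi k F) \<longlonglongrightarrow> \<phi> F"
        using tendsto_mult[OF tendsto_const chi_lim] by (intro AE_I2) auto
      show "AE F in \<nu> x. norm (\<phi> F * chi k F) \<le> \<bar>\<phi> F\<bar>" for k
        by (intro AE_I2) (auto simp: abs_mult intro!: mult_left_le chi_abs)
    qed
    then show ?thesis using True unfolding u_def by simp
  next
    case False
    then have "\<not> integrable (\<nu> x) \<phi>" using intS[OF x] by simp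
    then show ?thesis using False unfolding u_def by (simp add: not_integrable_integral_eq)
  qed
  show ?thesis by (rule borel_measurable_LIMSEQ_real[OF lim um])
qed


lemma chi_meas[measurable]: "chi k \<in> borel_measurable borel"
  by (rule borel_measurable_continuous_onI[OF chi_cont])

lemma Vmeas'[measurable]: "V n \<in> borel_measurable M"
  by (rule Vmeas)

lemma nu_int_abs_le:
  assumes "x \<in> space M" "integrable (\<nu> x) f" "\<And>F. \<bar>f F\<bar> \<le> (B::real)"
  shows "\<bar>\<integral>F. f F \<partial>\<nu> x\<bar> \<le> B"
proof -
  interpret prob_space "\<nu> x" using nuprob[OF assms(1)] .
  have "\<bar>\<integral>F. f F \<partial>\<nu> x\<bar> \<le> (\<integral>F. \<bar>f F\<bar> \<partial>\<nu> x)" by (rule integral_abs_bound)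
  also have "\<dots> \<le> (\<integral>F. B \<partial>\<nu> x)"
    using assms by (intro integral_mono) auto
  also have "\<dots> = B" by (simp add: prob_space)
  finally show ?thesis .
qed

lemma cut_Phi_int:
  assumes c: "continuous_on UNIV (\<phi> :: 'b \<Rightarrow> real)"
  shows "integrable M (\<lambda>x. \<integral>F. \<phi> F * chi k F \<partial>\<nu> x)"
proof -
  obtain B where B: "\<And>F. \<bar>\<phi> F * chi k F\<bar> \<le> B" using cut_bounded[OF c] by blast
  show ?thesis
  proof (rule integrable_const_bound[of _ B])
    show "AE x in M. norm (\<integral>F. \<phi> F * chi k F \<partial>\<nu> x) \<le> B"
      using nu_int_abs_le[OF _ cut_int[OF _ c] B] by (intro AE_I2) auto
    show "(\<lambda>x. \<integral>F. \<phi> F * chi k F \<partial>\<nu> x) \<in> borel_measurable M"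
      using ymeas[OF cut_C0(1)[OF c, of k] cut_C0(2)[OF c, of k]] .
  qed
qed

lemma N_cont: "continuous_on UNIV (\<lambda>F::'b. norm F ^ 2)"
  by (intro continuous_intros)

lemma PhiNk_bound: "(\<integral>x. (\<integral>F. norm F^2 * chi k F \<partial>\<nu> x) \<partial>M) \<le> C"
proof -
  have lim: "(\<lambda>n. \<integral>x. 1 * (norm (V n x)^2 * chi k (V n x)) \<partial>M) \<longlonglongrightarrow>
      (\<integral>x. 1 * (\<integral>F. norm F^2 * chi k F \<partial>\<nu> x) \<partial>M)"
    by (rule ylim[OF cut_C0(1)[OF N_cont] cut_C0(2)[OF N_cont]]) simp
  have "(\<integral>x. 1 * (norm (V n x)^2 * chi k (V n x)) \<partial>M) \<le> C" for n
  proof -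
    have "(\<integral>x. 1 * (norm (V n x)^2 * chi k (V n x)) \<partial>M) \<le> (\<integral>x. norm (V n x)^2 \<partial>M)"
    proof (rule integral_mono_AE')
      show "integrable M (\<lambda>x. norm (V n x)^2)" by (rule Vint)
    qed (auto intro!: AE_I2 mult_left_le chi_le1)
    then show ?thesis using Vbdd[of n] by linarith
  qed
  then show ?thesis using LIMSEQ_le_const2[OF lim] by auto
qed

lemma N_AE_and_int:
  shows "AE x in M. integrable (\<nu> x) (\<lambda>F. norm F^2)"
    and "integrable M (\<lambda>x. \<integral>F. norm F^2 \<partial>\<nu> x)"
proof -
  define P where "P k x = ennreal (\<integral>F. norm F^2 * chi k F \<partial>\<nu> x)" for k x
  have Pm[measurable]: "P k \<in> borel_measurable M" for k
    unfolding P_def using ymeas[OF cut_C0(1)[OF N_cont, of k] cut_C0(2)[OF N_cont, of k]] by measurable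
  have sup: "(\<integral>\<^sup>+F. ennreal (norm F^2) \<partial>\<nu> x) = (SUP k. P k x)" if x: "x \<in> space M" for x
    using nn_sup[OF x N_cont] unfolding P_def by simp
  have mono: "AE x in M. P k x \<le> P (Suc k) x" for k
  proof (rule AE_I2)
    fix x assume x: "x \<in> space M"
    show "P k x \<le> P (Suc k) x" unfolding P_def
      by (intro ennreal_leI integral_mono cut_int[OF x N_cont] mult_left_mono chi_mono) auto
  qed
  have Pint: "integral\<^sup>N M (P k) \<le> ennreal C" for k
  proof -
    have "integral\<^sup>N M (P k) = ennreal (\<integral>x. (\<integral>F. norm F^2 * chi k F \<partial>\<nu> x) \<partial>M)"
      unfolding P_def
      by (intro nn_integral_eq_integral cut_Phi_int[OF N_cont] AE_I2 integral_nonneg) (auto simp: chi_ge0)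
    also have "\<dots> \<le> ennreal C" using PhiNk_bound by (intro ennreal_leI)
    finally show ?thesis .
  qed
  have tot: "(\<integral>\<^sup>+x. (SUP k. P k x) \<partial>M) \<le> ennreal C"
    by (subst nn_integral_monotone_convergence_SUP_AE[of P, OF mono Pm]) (auto intro!: SUP_least Pint)
  then have fin: "(\<integral>\<^sup>+x. (SUP k. P k x) \<partial>M) \<noteq> \<infinity>"
    using neq_top_trans[OF ennreal_neq_top tot] by simp
  have ae: "AE x in M. (SUP k. P k x) \<noteq> \<infinity>"
    by (rule nn_integral_PInf_AE[OF _ fin]) measurable
  show ai: "AE x in M. integrable (\<nu> x) (\<lambda>F. norm F^2)"
    using ae
  proof (rule AE_mp, intro AE_I2 impI)
    fix x assume x: "x \<in> space M" and s: "(SUP k. P k x) \<noteq> \<infinity>"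
    show "integrable (\<nu> x) (\<lambda>F. norm F^2)"
    proof -
      have "(SUP k. P k x) < \<infinity>" using s by (simp add: less_top[symmetric])
      then have "(\<integral>\<^sup>+F. ennreal (norm F^2) \<partial>\<nu> x) < \<infinity>" using sup[OF x] by simp
      then show ?thesis
        unfolding integrable_iff_bounded using nu_meas[OF x N_cont] by simp
    qed
  qed
  show "integrable M (\<lambda>x. \<integral>F. norm F^2 \<partial>\<nu> x)"
  proof (rule integrableI_nonneg)
    show "(\<lambda>x. \<integral>F. norm F^2 \<partial>\<nu> x) \<in> borel_measurable M" by (rule Phi_meas[OF N_cont])
    show "AE x in M. 0 \<le> (\<integral>F. norm F^2 \<partial>\<nu> x)" by (intro AE_I2 integral_nonneg) auto
    have "(\<integral>\<^sup>+x. ennreal (\<integral>F. norm F^2 \<partial>\<nu> x) \<partial>M) = (\<integral>\<^sup>+x. (SUP k. P k x) \<partial>M)"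
    proof (rule nn_integral_cong_AE)
      show "AE x in M. ennreal (\<integral>F. norm F^2 \<partial>\<nu> x) = (SUP k. P k x)"
        using ai
      proof (rule AE_mp, intro AE_I2 impI)
        fix x assume x: "x \<in> space M" and i: "integrable (\<nu> x) (\<lambda>F. norm F^2)"
        show "ennreal (\<integral>F. norm F^2 \<partial>\<nu> x) = (SUP k. P k x)"
          using sup[OF x] nn_integral_eq_integral[OF i] by auto
      qed
    qed
    then have "(\<integral>\<^sup>+x. ennreal (\<integral>F. norm F^2 \<partial>\<nu> x) \<partial>M) \<noteq> \<infinity>"
      using fin by simp
    then show "(\<integral>\<^sup>+x. ennreal (\<integral>F. norm F^2 \<partial>\<nu> x) \<partial>M) < \<infinity>"
      by (simp add: less_top[symmetric])
  qed
qed


lemma cut_lim: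
  assumes x: "x \<in> space M" and c: "continuous_on UNIV (\<phi> :: 'b \<Rightarrow> real)"
    and ii: "integrable (\<nu> x) \<phi>"
  shows "(\<lambda>k. \<integral>F. \<phi> F * chi k F \<partial>\<nu> x) \<longlonglongrightarrow> (\<integral>F. \<phi> F \<partial>\<nu> x)"
proof (rule integral_dominated_convergence[where w="\<lambda>F. \<bar>\<phi> F\<bar>"])
  show "\<phi> \<in> borel_measurable (\<nu> x)" using nu_meas[OF x c] .
  show "(\<lambda>F. \<phi> F * chi k F) \<in> borel_measurable (\<nu> x)" for k
    using nu_meas[OF x cut_C0(1)[OF c]] .
  show "integrable (\<nu> x) (\<lambda>F. \<bar>\<phi> F\<bar>)" using ii by auto
  show "AE F in \<nu> x. (\<lambda>k. \<phi> F * chi k F) \<longlonglongrightarrow> \<phi> F"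
    using tendsto_mult[OF tendsto_const chi_lim] by (intro AE_I2) auto
  show "AE F in \<nu> x. norm (\<phi> F * chi k F) \<le> \<bar>\<phi> F\<bar>" for k
    by (intro AE_I2) (auto simp: abs_mult intro!: mult_left_le chi_abs)
qed

context
  fixes \<phi> :: "'b \<Rightarrow> real" and K :: real
  assumes c: "continuous_on UNIV \<phi>" and K: "K \<ge> 0" and gr: "\<And>F. \<bar>\<phi> F\<bar> \<le> K * norm F ^ 2"
begin

lemma phi_nu:
  "AE x in M. integrable (\<nu> x) \<phi> \<and> \<bar>\<integral>F. \<phi> F \<partial>\<nu> x\<bar> \<le> K * (\<integral>F. norm F^2 \<partial>\<nu> x)
     \<and> (\<forall>k. \<bar>\<integral>F. \<phi> F * chi k F \<partial>\<nu> x\<bar> \<le> K * (\<integral>F. norm F^2 \<partial>\<nu> x))"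
  using N_AE_and_int(1)
proof (rule AE_mp, intro AE_I2 impI)
  fix x assume x: "x \<in> space M" and i: "integrable (\<nu> x) (\<lambda>F. norm F^2)"
  have Ki: "integrable (\<nu> x) (\<lambda>F. K * norm F^2)" using i by auto
  have ii: "integrable (\<nu> x) \<phi>"
  proof (rule Bochner_Integration.integrable_bound[OF Ki nu_meas[OF x c]])
    show "AE F in \<nu> x. norm (\<phi> F) \<le> norm (K * norm F^2)"
    proof (rule AE_I2)
      fix F
      have "\<bar>\<phi> F\<bar> \<le> \<bar>K * norm F^2\<bar>" using gr[of F] by (simp add: K)
      then show "norm (\<phi> F) \<le> norm (K * norm F^2)" by simp
    qed
  qed
  have b1: "\<bar>\<integral>F. \<phi> F \<partial>\<nu> x\<bar> \<le> K * (\<integral>F. norm F^2 \<partial>\<nu> x)"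
  proof -
    have "\<bar>\<integral>F. \<phi> F \<partial>\<nu> x\<bar> \<le> (\<integral>F. \<bar>\<phi> F\<bar> \<partial>\<nu> x)" by (rule integral_abs_bound)
    also have "\<dots> \<le> (\<integral>F. K * norm F^2 \<partial>\<nu> x)"
      by (rule integral_mono[OF integrable_abs[OF ii] Ki gr])
    finally show ?thesis by simp
  qed
  have b2: "\<bar>\<integral>F. \<phi> F * chi k F \<partial>\<nu> x\<bar> \<le> K * (\<integral>F. norm F^2 \<partial>\<nu> x)" for k
  proof -
    have "\<bar>\<integral>F. \<phi> F * chi k F \<partial>\<nu> x\<bar> \<le> (\<integral>F. \<bar>\<phi> F * chi k F\<bar> \<partial>\<nu> x)" by (rule integral_abs_bound)
    also have "\<dots> \<le> (\<integral>F. K * norm F^2 \<partial>\<nu> x)"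
    proof (intro integral_mono)
      show "integrable (\<nu> x) (\<lambda>F. \<bar>\<phi> F * chi k F\<bar>)" using cut_int[OF x c] by auto
      show "integrable (\<nu> x) (\<lambda>F. K * norm F^2)" by (rule Ki)
      fix F
      have "\<bar>\<phi> F * chi k F\<bar> \<le> \<bar>\<phi> F\<bar>" by (auto simp: abs_mult intro!: mult_left_le chi_abs)
      then show "\<bar>\<phi> F * chi k F\<bar> \<le> K * norm F^2" using gr[of F] by linarith
    qed
    finally show ?thesis by simp
  qed
  show "integrable (\<nu> x) \<phi> \<and> \<bar>\<integral>F. \<phi> F \<partial>\<nu> x\<bar> \<le> K * (\<integral>F. norm F^2 \<partial>\<nu> x)
     \<and> (\<forall>k. \<bar>\<integral>F. \<phi> F * chi k F \<partial>\<nu> x\<bar> \<le> K * (\<integral>F. norm F^2 \<partial>\<nu> x))"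
    using ii b1 b2 by blast
qed

lemma Phi_int: "integrable M (\<lambda>x. \<integral>F. \<phi> F \<partial>\<nu> x)"
proof (rule Bochner_Integration.integrable_bound[OF _ Phi_meas[OF c]])
  show "integrable M (\<lambda>x. K * (\<integral>F. norm F^2 \<partial>\<nu> x))" using N_AE_and_int(2) by auto
  show "AE x in M. norm (\<integral>F. \<phi> F \<partial>\<nu> x) \<le> norm (K * (\<integral>F. norm F^2 \<partial>\<nu> x))"
    using phi_nu by eventually_elim auto
qed

lemma gPhi_klim:
  assumes gm: "g \<in> borel_measurable M" and gb: "AE x in M. \<bar>g x\<bar> \<le> Cg"
  shows "(\<lambda>k. \<integral>x. g x * (\<integral>F. \<phi> F * chi k F \<partial>\<nu> x) \<partial>M) \<longlonglongrightarrow> (\<integral>x. g x * (\<integral>F. \<phi> F \<partial>\<nu> x) \<partial>M)"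
proof (rule integral_dominated_convergence[where w="\<lambda>x. Cg * (K * (\<integral>F. norm F^2 \<partial>\<nu> x))"])
  show "(\<lambda>x. g x * (\<integral>F. \<phi> F \<partial>\<nu> x)) \<in> borel_measurable M"
    using gm Phi_meas[OF c] by measurable
  show "(\<lambda>x. g x * (\<integral>F. \<phi> F * chi k F \<partial>\<nu> x)) \<in> borel_measurable M" for k
    using gm ymeas[OF cut_C0(1)[OF c, of k] cut_C0(2)[OF c, of k]] by measurable
  show "integrable M (\<lambda>x. Cg * (K * (\<integral>F. norm F^2 \<partial>\<nu> x)))" using N_AE_and_int(2) by auto
  show "AE x in M. (\<lambda>k. g x * (\<integral>F. \<phi> F * chi k F \<partial>\<nu> x)) \<longlonglongrightarrow> g x * (\<integral>F. \<phi> F \<partial>\<nu> x)"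
    using phi_nu
  proof (rule AE_mp, intro AE_I2 impI)
    fix x assume x: "x \<in> space M" and h: "integrable (\<nu> x) \<phi> \<and> \<bar>\<integral>F. \<phi> F \<partial>\<nu> x\<bar> \<le> K * (\<integral>F. norm F^2 \<partial>\<nu> x)
     \<and> (\<forall>k. \<bar>\<integral>F. \<phi> F * chi k F \<partial>\<nu> x\<bar> \<le> K * (\<integral>F. norm F^2 \<partial>\<nu> x))"
    show "(\<lambda>k. g x * (\<integral>F. \<phi> F * chi k F \<partial>\<nu> x)) \<longlonglongrightarrow> g x * (\<integral>F. \<phi> F \<partial>\<nu> x)"
      using cut_lim[OF x c] h by (intro tendsto_mult tendsto_const) auto
  qed
  show "AE x in M. norm (g x * (\<integral>F. \<phi> F * chi k F \<partial>\<nu> x)) \<le> Cg * (K * (\<integral>F. norm F^2 \<partial>\<nu> x))" for k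
    using phi_nu gb
  proof eventually_elim
    case (elim x)
    then show ?case by (auto simp: abs_mult intro!: mult_mono)
  qed
qed


lemma phi_meas[measurable]: "\<phi> \<in> borel_measurable borel"
  by (rule borel_measurable_continuous_onI[OF c])

lemma NV_int: "integrable M (\<lambda>x. B * norm (V n x)^2)"
  using Vint[of n] by auto

lemma gphiV_int:
  assumes gm: "g \<in> borel_measurable M" and gb: "AE x in M. \<bar>g x\<bar> \<le> Cg"
  shows "integrable M (\<lambda>x. g x * \<phi> (V n x))"
proof (rule Bochner_Integration.integrable_bound[OF NV_int[of "\<bar>Cg\<bar> * K" n]])
  show "(\<lambda>x. g x * \<phi> (V n x)) \<in> borel_measurable M" using gm by measurable
  show "AE x in M. norm (g x * \<phi> (V n x)) \<le> norm (\<bar>Cg\<bar> * K * norm (V n x)^2)"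
    using gb
  proof eventually_elim
    case (elim x)
    have "\<bar>g x\<bar> * \<bar>\<phi> (V n x)\<bar> \<le> \<bar>Cg\<bar> * (K * norm (V n x)^2)"
      using elim gr[of "V n x"] by (intro mult_mono) auto
    then show ?case using K by (simp add: abs_mult mult.assoc)
  qed
qed

lemma gpsiV_int:
  assumes gm: "g \<in> borel_measurable M" and gb: "AE x in M. \<bar>g x\<bar> \<le> Cg"
  shows "integrable M (\<lambda>x. g x * (\<phi> (V n x) * chi k (V n x)))"
proof (rule Bochner_Integration.integrable_bound[OF gphiV_int[OF gm gb, of n]])
  show "(\<lambda>x. g x * (\<phi> (V n x) * chi k (V n x))) \<in> borel_measurable M" using gm by measurable
  show "AE x in M. norm (g x * (\<phi> (V n x) * chi k (V n x))) \<le> norm (g x * \<phi> (V n x))"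
  proof (intro AE_I2)
    fix x
    have "\<bar>\<phi> (V n x)\<bar> * \<bar>chi k (V n x)\<bar> \<le> \<bar>\<phi> (V n x)\<bar>" by (rule mult_left_le[OF chi_abs abs_ge_zero])
    then have "\<bar>g x\<bar> * (\<bar>\<phi> (V n x)\<bar> * \<bar>chi k (V n x)\<bar>) \<le> \<bar>g x\<bar> * \<bar>\<phi> (V n x)\<bar>" by (rule mult_left_mono) simp
    then show "norm (g x * (\<phi> (V n x) * chi k (V n x))) \<le> norm (g x * \<phi> (V n x))" by (simp add: abs_mult)
  qed
qed

lemma tail_int: "integrable M (\<lambda>x. if real k < norm (V n x) then norm (V n x)^2 else 0)"
proof (rule Bochner_Integration.integrable_bound[OF Vint[of n]])
  show "(\<lambda>x. if real k < norm (V n x) then norm (V n x)^2 else 0) \<in> borel_measurable M" by measurable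
qed (auto intro!: AE_I2)

lemma A_lim:
  assumes gm: "g \<in> borel_measurable M" and gb: "AE x in M. \<bar>g x\<bar> \<le> Cg" and Cg: "Cg \<ge> 0"
  shows "(\<lambda>n. \<integral>x. g x * \<phi> (V n x) \<partial>M) \<longlonglongrightarrow> (\<integral>x. g x * (\<integral>F. \<phi> F \<partial>\<nu> x) \<partial>M)"
proof (rule LIMSEQ_I)
  fix e :: real assume e: "0 < e"
  define e1 where "e1 = e / (3 * (Cg * K + 1))"
  have CK: "Cg * K \<ge> 0" using Cg K by simp
  have e1: "e1 > 0" unfolding e1_def using e CK by (intro divide_pos_pos) auto
  have CKe1: "Cg * K * e1 < e / 3"
  proof -
    have "Cg * K * e1 = (Cg * K / (Cg * K + 1)) * (e / 3)" unfolding e1_def using CK by (simp add: field_simps)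
    also have "\<dots> < 1 * (e / 3)" using CK e by (intro mult_strict_right_mono) auto
    finally show ?thesis by simp
  qed
  obtain k1 where k1: "\<And>k n. k \<ge> k1 \<Longrightarrow>
      (\<integral>x. (if real k < norm (V n x) then norm (V n x)^2 else 0) \<partial>M) < e1"
    using tail[OF e1] by blast
  obtain k2 where k2: "\<And>k. k \<ge> k2 \<Longrightarrow> norm ((\<integral>x. g x * (\<integral>F. \<phi> F * chi k F \<partial>\<nu> x) \<partial>M)
        - (\<integral>x. g x * (\<integral>F. \<phi> F \<partial>\<nu> x) \<partial>M)) < e / 3"
    using LIMSEQ_D[OF gPhi_klim[OF gm gb], of "e/3"] e by auto
  define k where "k = max k1 k2"
  have gi: "integrable M g"
    by (rule integrable_const_bound[of _ Cg]) (use gb gm in auto)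
  obtain n0 where n0: "\<And>n. n \<ge> n0 \<Longrightarrow> norm ((\<integral>x. g x * (\<phi> (V n x) * chi k (V n x)) \<partial>M)
        - (\<integral>x. g x * (\<integral>F. \<phi> F * chi k F \<partial>\<nu> x) \<partial>M)) < e / 3"
    using LIMSEQ_D[OF ylim[OF cut_C0(1)[OF c, of k] cut_C0(2)[OF c, of k] gi], of "e/3"] e by auto
  show "\<exists>no. \<forall>n\<ge>no. norm ((\<integral>x. g x * \<phi> (V n x) \<partial>M) - (\<integral>x. g x * (\<integral>F. \<phi> F \<partial>\<nu> x) \<partial>M)) < e"
  proof (intro exI allI impI)
    fix n assume n: "n \<ge> n0"
    have d1: "\<bar>(\<integral>x. g x * \<phi> (V n x) \<partial>M) - (\<integral>x. g x * (\<phi> (V n x) * chi k (V n x)) \<partial>M)\<bar> < e / 3"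
    proof -
      have "(\<integral>x. g x * \<phi> (V n x) \<partial>M) - (\<integral>x. g x * (\<phi> (V n x) * chi k (V n x)) \<partial>M)
          = (\<integral>x. g x * \<phi> (V n x) - g x * (\<phi> (V n x) * chi k (V n x)) \<partial>M)"
        by (rule Bochner_Integration.integral_diff[symmetric, OF gphiV_int[OF gm gb] gpsiV_int[OF gm gb]])
      also have "\<bar>\<dots>\<bar> \<le> (\<integral>x. \<bar>g x * \<phi> (V n x) - g x * (\<phi> (V n x) * chi k (V n x))\<bar> \<partial>M)"
        by (rule integral_abs_bound)
      also have "\<dots> \<le> (\<integral>x. Cg * K * (if real k < norm (V n x) then norm (V n x)^2 else 0) \<partial>M)"
      proof (rule integral_mono_AE')
        show "integrable M (\<lambda>x. Cg * K * (if real k < norm (V n x) then norm (V n x)^2 else 0))"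
          using tail_int by auto
        show "AE x in M. 0 \<le> Cg * K * (if real k < norm (V n x) then norm (V n x)^2 else 0)"
          using CK by (intro AE_I2) auto
        show "AE x in M. \<bar>g x * \<phi> (V n x) - g x * (\<phi> (V n x) * chi k (V n x))\<bar>
            \<le> Cg * K * (if real k < norm (V n x) then norm (V n x)^2 else 0)"
          using gb
        proof eventually_elim
          case (elim x)
          have eq: "g x * \<phi> (V n x) - g x * (\<phi> (V n x) * chi k (V n x))
              = g x * (\<phi> (V n x) * (1 - chi k (V n x)))" by (simp add: algebra_simps)
          show ?case
          proof (cases "real k < norm (V n x)")
            case True
            have "\<bar>1 - chi k (V n x)\<bar> \<le> 1" using chi_ge0[of k "V n x"] chi_le1[of k "V n x"] by simp
            then have "\<bar>\<phi> (V n x) * (1 - chi k (V n x))\<bar> \<le> K * norm (V n x)^2"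
              using gr[of "V n x"] by (simp add: abs_mult) (metis abs_ge_zero mult_left_le order_trans)
            then have "\<bar>g x\<bar> * \<bar>\<phi> (V n x) * (1 - chi k (V n x))\<bar> \<le> Cg * (K * norm (V n x)^2)"
              using elim by (intro mult_mono) auto
            then show ?thesis using True by (simp add: eq abs_mult mult.assoc)
          next
            case False
            then have "chi k (V n x) = 1" by (intro chi_one) auto
            then show ?thesis using False CK by (simp add: eq)
          qed
        qed
      qed
      also have "\<dots> = Cg * K * (\<integral>x. (if real k < norm (V n x) then norm (V n x)^2 else 0) \<partial>M)"
        by simp
      also have "\<dots> \<le> Cg * K * e1"
        using k1[of k n] CK unfolding k_def by (intro mult_left_mono) auto
      finally show ?thesis using CKe1 by linarith
    qed
    have d2: "\<bar>(\<integral>x. g x * (\<phi> (V n x) * chi k (V n x)) \<partial>M)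
        - (\<integral>x. g x * (\<integral>F. \<phi> F * chi k F \<partial>\<nu> x) \<partial>M)\<bar> < e / 3"
      using n0[OF n] by simp
    have d3: "\<bar>(\<integral>x. g x * (\<integral>F. \<phi> F * chi k F \<partial>\<nu> x) \<partial>M)
        - (\<integral>x. g x * (\<integral>F. \<phi> F \<partial>\<nu> x) \<partial>M)\<bar> < e / 3"
      using k2[of k] unfolding k_def by simp
    show "norm ((\<integral>x. g x * \<phi> (V n x) \<partial>M) - (\<integral>x. g x * (\<integral>F. \<phi> F \<partial>\<nu> x) \<partial>M)) < e"
      using tri3[OF d1 d2 d3] by simp
  qed
qed

end


lemma C_nonneg: "C \<ge> 0"
proof -
  have "0 \<le> (\<integral>x. norm (V 0 x)^2 \<partial>M)" by (rule Bochner_Integration.integral_nonneg) simp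
  then show ?thesis using Vbdd[of 0] by linarith
qed

lemma tail_int': "integrable M (\<lambda>x. if real k < norm (V n x) then norm (V n x)^2 else 0)"
proof (rule Bochner_Integration.integrable_bound[OF Vint[of n]])
  show "(\<lambda>x. if real k < norm (V n x) then norm (V n x)^2 else 0) \<in> borel_measurable M" by measurable
qed (auto intro!: AE_I2)

lemma B_lim:
  fixes D :: "nat \<Rightarrow> 'a \<Rightarrow> real" and \<alpha> :: "nat \<Rightarrow> real"
  assumes Dm: "\<And>n. D n \<in> borel_measurable M"
    and Db: "\<And>n. AE x in M. \<bar>D n x\<bar> \<le> B2" and B2: "B2 \<ge> 0"
    and Dc: "\<And>\<epsilon>. \<epsilon> > 0 \<Longrightarrow> \<exists>\<eta>>0. \<forall>n. AE x in M. norm (\<alpha> n *\<^sub>R V n x) < \<eta> \<longrightarrow> \<bar>D n x\<bar> < \<epsilon>"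
    and \<alpha>lim: "\<alpha> \<longlonglongrightarrow> 0"
    and gm: "g \<in> borel_measurable M" and gb: "AE x in M. \<bar>g x\<bar> \<le> Cg" and Cg: "Cg \<ge> 0"
  shows "(\<lambda>n. \<integral>x. g x * (D n x * norm (V n x)^2) \<partial>M) \<longlonglongrightarrow> 0"
proof (rule LIMSEQ_I)
  fix e :: real assume e: "0 < e"
  have C0: "C \<ge> 0" by (rule C_nonneg)
  define \<epsilon> where "\<epsilon> = e / (2 * (Cg * C + 1))"
  have CC: "Cg * C \<ge> 0" using Cg C0 by simp
  have \<epsilon>: "\<epsilon> > 0" unfolding \<epsilon>_def using e CC by (intro divide_pos_pos) auto
  have Ce: "Cg * \<epsilon> * C \<le> e / 2"
  proof -
    have "Cg * \<epsilon> * C = (Cg * C / (Cg * C + 1)) * (e / 2)" unfolding \<epsilon>_def using Cg C0 by (simp add: field_simps)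
    also have "\<dots> \<le> 1 * (e / 2)" using CC e by (intro mult_right_mono) auto
    finally show ?thesis by simp
  qed
  define e2 where "e2 = e / (2 * (Cg * B2 + 1))"
  have CB: "Cg * B2 \<ge> 0" using Cg B2 by simp
  have e2: "e2 > 0" unfolding e2_def using e CB by (intro divide_pos_pos) auto
  have Be: "Cg * B2 * e2 < e / 2"
  proof -
    have "Cg * B2 * e2 = (Cg * B2 / (Cg * B2 + 1)) * (e / 2)" unfolding e2_def using Cg B2 by (simp add: field_simps)
    also have "\<dots> < 1 * (e / 2)" using CB e by (intro mult_strict_right_mono) auto
    finally show ?thesis by simp
  qed
  obtain \<eta> where \<eta>: "\<eta> > 0" and \<eta>D: "\<And>n. AE x in M. norm (\<alpha> n *\<^sub>R V n x) < \<eta> \<longrightarrow> \<bar>D n x\<bar> < \<epsilon>"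
    using Dc[OF \<epsilon>] by blast
  obtain k0 where k0: "\<And>k n. k \<ge> k0 \<Longrightarrow>
      (\<integral>x. (if real k < norm (V n x) then norm (V n x)^2 else 0) \<partial>M) < e2"
    using tail[OF e2] by blast
  have r: "\<eta> / (real k0 + 1) > 0" using \<eta> by simp
  obtain n0 where n0: "\<And>n. n \<ge> n0 \<Longrightarrow> norm (\<alpha> n - 0) < \<eta> / (real k0 + 1)"
    using LIMSEQ_D[OF \<alpha>lim r] by blast
  show "\<exists>no. \<forall>n\<ge>no. norm ((\<integral>x. g x * (D n x * norm (V n x)^2) \<partial>M) - 0) < e"
  proof (intro exI allI impI)
    fix n assume n: "n \<ge> n0"
    have an: "\<bar>\<alpha> n\<bar> * (real k0 + 1) < \<eta>" using n0[OF n] by (simp add: field_simps)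
    let ?T = "\<lambda>x. if real k0 < norm (V n x) then norm (V n x)^2 else 0"
    have "\<bar>\<integral>x. g x * (D n x * norm (V n x)^2) \<partial>M\<bar> \<le> (\<integral>x. \<bar>g x * (D n x * norm (V n x)^2)\<bar> \<partial>M)"
      by (rule integral_abs_bound)
    also have "\<dots> \<le> (\<integral>x. Cg * \<epsilon> * norm (V n x)^2 + Cg * B2 * ?T x \<partial>M)"
    proof (rule integral_mono_AE')
      show "integrable M (\<lambda>x. Cg * \<epsilon> * norm (V n x)^2 + Cg * B2 * ?T x)"
        using Vint[of n] tail_int'[of k0 n] by auto
      show "AE x in M. 0 \<le> Cg * \<epsilon> * norm (V n x)^2 + Cg * B2 * ?T x"
        using Cg B2 \<epsilon> by (intro AE_I2) auto
      show "AE x in M. \<bar>g x * (D n x * norm (V n x)^2)\<bar> \<le> Cg * \<epsilon> * norm (V n x)^2 + Cg * B2 * ?T x"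
        using gb Db[of n] \<eta>D[of n]
      proof eventually_elim
        case (elim x)
        have t0: "0 \<le> Cg * B2 * ?T x" using Cg B2 by auto
        have t1: "0 \<le> Cg * \<epsilon> * norm (V n x)^2" using Cg \<epsilon> by auto
        show ?case
        proof (cases "real k0 < norm (V n x)")
          case True
          have "\<bar>g x\<bar> * (\<bar>D n x\<bar> * norm (V n x)^2) \<le> Cg * (B2 * norm (V n x)^2)"
            using elim by (intro mult_mono) auto
          then show ?thesis using True t1 by (simp add: abs_mult mult.assoc)
        next
          case False
          have "norm (\<alpha> n *\<^sub>R V n x) = \<bar>\<alpha> n\<bar> * norm (V n x)" by simp
          also have "\<dots> \<le> \<bar>\<alpha> n\<bar> * (real k0 + 1)" using False by (intro mult_left_mono) auto
          finally have "norm (\<alpha> n *\<^sub>R V n x) < \<eta>" using an by linarith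
          then have "\<bar>D n x\<bar> < \<epsilon>" using elim by auto
          then have "\<bar>g x\<bar> * (\<bar>D n x\<bar> * norm (V n x)^2) \<le> Cg * (\<epsilon> * norm (V n x)^2)"
            using elim by (intro mult_mono) auto
          then show ?thesis using t0 by (simp add: abs_mult mult.assoc)
        qed
      qed
    qed
    also have "\<dots> = Cg * \<epsilon> * (\<integral>x. norm (V n x)^2 \<partial>M) + Cg * B2 * (\<integral>x. ?T x \<partial>M)"
      using Vint[of n] tail_int'[of k0 n] by simp
    also have "\<dots> \<le> Cg * \<epsilon> * C + Cg * B2 * e2"
      using Vbdd[of n] k0[of k0 n] Cg \<epsilon> B2 by (intro add_mono mult_left_mono) auto
    also have "\<dots> < e" using Ce Be by linarith
    finally show "norm ((\<integral>x. g x * (D n x * norm (V n x)^2) \<partial>M) - 0) < e" by simp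
  qed
qed


lemma wcA:
  assumes c: "continuous_on UNIV (\<phi> :: 'b \<Rightarrow> real)" and K: "K \<ge> 0" and gr: "\<And>F. \<bar>\<phi> F\<bar> \<le> K * norm F ^ 2"
  shows "wc M (\<lambda>n x. \<phi> (V n x)) (\<lambda>x. \<integral>F. \<phi> F \<partial>\<nu> x)"
  unfolding wc_def
proof (intro conjI allI impI)
  fix n show "integrable M (\<lambda>x. \<phi> (V n x))"
    using gphiV_int[OF c K gr, of "\<lambda>x. 1" 1 n] by simp
  show "integrable M (\<lambda>x. \<integral>F. \<phi> F \<partial>\<nu> x)" by (rule Phi_int[OF c K gr])
  fix g :: "'a \<Rightarrow> real" and Cg :: real assume gm: "g \<in> borel_measurable M" and gb: "AE x in M. \<bar>g x\<bar> \<le> Cg"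
  have gb': "AE x in M. \<bar>g x\<bar> \<le> \<bar>Cg\<bar>" using gb by eventually_elim auto
  show "(\<lambda>n. \<integral>x. g x * \<phi> (V n x) \<partial>M) \<longlonglongrightarrow> (\<integral>x. g x * (\<integral>F. \<phi> F \<partial>\<nu> x) \<partial>M)"
    by (rule A_lim[OF c K gr gm gb']) simp
qed

lemma wcB:
  fixes D :: "nat \<Rightarrow> 'a \<Rightarrow> real" and \<alpha> :: "nat \<Rightarrow> real"
  assumes Dm: "\<And>n. D n \<in> borel_measurable M"
    and Db: "\<And>n. AE x in M. \<bar>D n x\<bar> \<le> B2" and B2: "B2 \<ge> 0"
    and Dc: "\<And>\<epsilon>. \<epsilon> > 0 \<Longrightarrow> \<exists>\<eta>>0. \<forall>n. AE x in M. norm (\<alpha> n *\<^sub>R V n x) < \<eta> \<longrightarrow> \<bar>D n x\<bar> < \<epsilon>"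
    and \<alpha>lim: "\<alpha> \<longlonglongrightarrow> 0"
  shows "wc M (\<lambda>n x. D n x * norm (V n x)^2) (\<lambda>x. 0)"
  unfolding wc_def
proof (intro conjI allI impI)
  fix n show "integrable M (\<lambda>x. D n x * norm (V n x)^2)"
  proof (rule Bochner_Integration.integrable_bound[of M "\<lambda>x. B2 * norm (V n x)^2"])
    show "integrable M (\<lambda>x. B2 * norm (V n x)^2)" using Vint[of n] by simp
    show "(\<lambda>x. D n x * norm (V n x)^2) \<in> borel_measurable M" using Dm[of n] by measurable
    show "AE x in M. norm (D n x * norm (V n x)^2) \<le> norm (B2 * norm (V n x)^2)"
      using Db[of n] by eventually_elim (use B2 in \<open>auto simp: abs_mult intro!: mult_right_mono\<close>)
  qed
  show "integrable M (\<lambda>x. 0::real)" by simp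
  fix g :: "'a \<Rightarrow> real" and Cg :: real assume gm: "g \<in> borel_measurable M" and gb: "AE x in M. \<bar>g x\<bar> \<le> Cg"
  have gb': "AE x in M. \<bar>g x\<bar> \<le> \<bar>Cg\<bar>" using gb by eventually_elim auto
  show "(\<lambda>n. \<integral>x. g x * (D n x * norm (V n x)^2) \<partial>M) \<longlonglongrightarrow> (\<integral>x. g x * 0 \<partial>M)"
    using B_lim[OF Dm Db B2 Dc \<alpha>lim gm gb'] by simp
qed

end

lemma complete_AE:
  fixes f f' :: "'a::euclidean_space \<Rightarrow> real"
  assumes S: "S \<in> sets lebesgue" and f': "f' \<in> borel_measurable (lebesgue_on S)"
    and ae: "AE x in lebesgue_on S. f x = f' x"
  shows "f \<in> borel_measurable (lebesgue_on S)"
proof -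
  from ae obtain N where N1: "{x \<in> space (lebesgue_on S). \<not> f x = f' x} \<subseteq> N"
    and N0: "emeasure (lebesgue_on S) N = 0" and Ns: "N \<in> sets (lebesgue_on S)"
    by (rule AE_E)
  have N: "{x \<in> space (lebesgue_on S). \<not> f x = f' x} \<subseteq> N" "N \<in> null_sets (lebesgue_on S)"
    using N1 N0 Ns by (auto intro: null_setsI)
  have "f' \<in> borel_measurable (lebesgue_on (S - N))"
    using borel_measurable_diff_null[OF N(2) S, of f'] f' by blast
  moreover have "\<And>x. x \<in> space (lebesgue_on (S - N)) \<Longrightarrow> f' x = f x" using N(1) by auto
  ultimately have "f \<in> borel_measurable (lebesgue_on (S - N))"
    using measurable_cong by metis
  then show ?thesis using borel_measurable_diff_null[OF N(2) S, of f] by blast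
qed

lemma meas_comp2:
  fixes U :: "'a::euclidean_space \<Rightarrow> 'b::euclidean_space \<Rightarrow> real"
  assumes S: "S \<in> sets lebesgue" and c: "continuous_on (S \<times> UNIV) (\<lambda>(x, G). U x G)"
    and G: "G \<in> borel_measurable (lebesgue_on S)"
  shows "(\<lambda>x. U x (G x)) \<in> borel_measurable (lebesgue_on S)"
proof -
  have idm: "(\<lambda>x. x) \<in> borel_measurable (lebesgue_on S)"
    by (rule continuous_imp_measurable_on_sets_lebesgue[OF continuous_on_id S])
  have p: "(\<lambda>x. (x, G x)) \<in> lebesgue_on S \<rightarrow>\<^sub>M borel"
    using measurable_Pair[OF idm G] unfolding borel_prod .
  have p2: "(\<lambda>x. (x, G x)) \<in> lebesgue_on S \<rightarrow>\<^sub>M restrict_space borel (S \<times> UNIV)"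
    by (rule measurable_restrict_space2[OF _ p]) auto
  have u: "(\<lambda>(x, G). U x G) \<in> borel_measurable (restrict_space borel (S \<times> UNIV))"
    by (rule borel_measurable_continuous_on_restrict[OF c])
  show ?thesis using measurable_comp[OF p2 u] by (simp add: o_def)
qed

lemma quad_expand:
  fixes l :: "'v::euclidean_space \<Rightarrow>\<^sub>L 'v"
  shows "blinfun_apply l G \<bullet> G = (\<Sum>a\<in>Basis. \<Sum>b\<in>Basis. (blinfun_apply l a \<bullet> b) * ((G \<bullet> a) * (G \<bullet> b)))"
proof -
  have "blinfun_apply l G = blinfun_apply l (\<Sum>a\<in>Basis. (G \<bullet> a) *\<^sub>R a)"
    by (simp add: euclidean_representation)
  also have "\<dots> = (\<Sum>a\<in>Basis. (G \<bullet> a) *\<^sub>R blinfun_apply l a)"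
    by (simp add: blinfun.sum_right blinfun.scaleR_right)
  finally have "blinfun_apply l G \<bullet> G = (\<Sum>a\<in>Basis. (G \<bullet> a) * (blinfun_apply l a \<bullet> G))"
    by (simp add: inner_sum_left)
  also have "\<dots> = (\<Sum>a\<in>Basis. (G \<bullet> a) * (\<Sum>b\<in>Basis. (blinfun_apply l a \<bullet> b) * (G \<bullet> b)))"
    by (subst euclidean_inner) simp
  also have "\<dots> = (\<Sum>a\<in>Basis. \<Sum>b\<in>Basis. (blinfun_apply l a \<bullet> b) * ((G \<bullet> a) * (G \<bullet> b)))"
    by (simp add: sum_distrib_left mult_ac)
  finally show ?thesis .
qed

lemma wc_weak:
  assumes "wc (leb_on \<Omega>) f h"
  shows "weak_L1_conv \<Omega> f h"
  using assms unfolding wc_def weak_L1_conv_def Linfty_def by blast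


theorem lemma7p2:
  fixes \<Omega> :: "(real^'d) set"
    and U :: "real^'d \<Rightarrow> real^'d^'m \<Rightarrow> real"
    and L :: "real^'d \<Rightarrow> ((real^'d^'m) \<Rightarrow>\<^sub>L (real^'d^'m))"
    and z :: "nat \<Rightarrow> real^'d \<Rightarrow> real^'m"
    and Dz :: "nat \<Rightarrow> real^'d \<Rightarrow> real^'d^'m"
    and \<alpha> :: "nat \<Rightarrow> real"
    and \<nu> :: "real^'d \<Rightarrow> (real^'d^'m) measure"
  assumes dom: "bounded_C1_domain \<Omega>"
    and U_cont: "continuous_on (closure \<Omega> \<times> UNIV) (\<lambda>(x, G). U x G)"
    and L_cont: "continuous_on (closure \<Omega>) L"
    and W12: "\<And>n. W12 \<Omega> (z n) (Dz n)"
    and W12_bdd: "\<exists>C. \<forall>n. (\<integral>x. norm (z n x) ^ 2 \<partial>leb_on \<Omega>)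
                        + (\<integral>x. norm (Dz n x) ^ 2 \<partial>leb_on \<Omega>) \<le> C"
    and equi: "equiintegrable \<Omega> (\<lambda>n x. norm (Dz n x) ^ 2)"
    and \<alpha>_pos: "\<And>n. \<alpha> n > 0"
    and \<alpha>_lim: "\<alpha> \<longlonglongrightarrow> 0"
    and \<alpha>_Linfty: "\<exists>C. \<forall>n. AE x in leb_on \<Omega>. norm (\<alpha> n *\<^sub>R Dz n x) \<le> C"
    and YM: "generates_YM \<Omega> Dz \<nu>"
  shows "\<exists>r::nat \<Rightarrow> nat. strict_mono r \<and>
           weak_L1_conv \<Omega> (\<lambda>n x. calF U L x (\<alpha> (r n)) (Dz (r n) x))
             (\<lambda>x. U x 0 * (\<integral>F. (norm F)\<^sup>2 \<partial>\<nu> x)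
                  + 1/2 * (\<integral>F. blinfun_apply (L x) F \<bullet> F \<partial>\<nu> x))"
proof -
  define M where "M = leb_on \<Omega>"
  have op: "open \<Omega>" and bd: "bounded \<Omega>" and ne: "\<Omega> \<noteq> {}"
    using dom unfolding bounded_C1_domain_def by auto
  have \<Omega>l: "\<Omega> \<in> lmeasurable" by (rule lmeasurable_open[OF bd op])
  have \<Omega>s: "\<Omega> \<in> sets lebesgue" using \<Omega>l by (simp add: fmeasurable_def)
  have fmM: "finite_measure M" unfolding M_def by (rule finite_measure_lebesgue_on[OF \<Omega>l])
  interpret fm: finite_measure M by (rule fmM)
  have spM: "space M = \<Omega>" unfolding M_def by simp
  obtain C where C: "\<And>n. (\<integral>x. norm (z n x) ^ 2 \<partial>M) + (\<integral>x. norm (Dz n x) ^ 2 \<partial>M) \<le> C"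
    using W12_bdd unfolding M_def by blast
  have Vbdd: "(\<integral>x. norm (Dz n x) ^ 2 \<partial>M) \<le> C" for n
  proof -
    have "0 \<le> (\<integral>x. norm (z n x) ^ 2 \<partial>M)" by (rule Bochner_Integration.integral_nonneg) simp
    then show ?thesis using C[of n] by linarith
  qed
  have C0: "C \<ge> 0"
  proof -
    have "0 \<le> (\<integral>x. norm (Dz 0 x) ^ 2 \<partial>M)" by (rule Bochner_Integration.integral_nonneg) simp
    then show ?thesis using Vbdd[of 0] by linarith
  qed
  have Vmeas: "Dz n \<in> borel_measurable M" for n using W12[of n] unfolding W12_def M_def by blast
  have Vint: "integrable M (\<lambda>x. norm (Dz n x)^2)" for n using W12[of n] unfolding W12_def M_def by blast
  have tail: "\<exists>k0::nat. \<forall>k\<ge>k0. \<forall>n.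
          (\<integral>x. (if real k < norm (Dz n x) then norm (Dz n x)^2 else 0) \<partial>M) < e" if e: "e > 0" for e
  proof -
    obtain \<delta> where \<delta>: "\<delta> > 0" and h\<delta>: "\<And>n E. E \<in> sets lebesgue \<Longrightarrow> E \<subseteq> \<Omega> \<Longrightarrow> measure lebesgue E < \<delta> \<Longrightarrow>
        (\<integral>x. \<bar>norm (Dz n x) ^ 2\<bar> \<partial>leb_on E) < e"
      using equi e unfolding equiintegrable_def by meson
    obtain k1 :: nat where k1: "C / \<delta> < real k1" using reals_Archimedean2 by blast
    define k0 where "k0 = max k1 1"
    show ?thesis
    proof (intro exI allI impI)
      fix k n assume k: "k0 \<le> k"
      have k1': "C / \<delta> < real k" and kge: "real k \<ge> 1" using k k1 unfolding k0_def by auto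
      define E where "E = {x \<in> \<Omega>. real k < norm (Dz n x)}"
      have Eeq: "E = {x \<in> space M. real k < norm (Dz n x)}" unfolding E_def spM ..
      have Vm[measurable]: "Dz n \<in> borel_measurable M" by (rule Vmeas)
      have EM: "E \<in> sets M" unfolding Eeq by measurable
      have Esub: "E \<subseteq> \<Omega>" unfolding E_def by auto
      have El: "E \<in> sets lebesgue"
        using EM \<Omega>s unfolding M_def by (simp add: sets_restrict_space_iff)
      have "measure lebesgue E = measure M E"
        unfolding M_def using \<Omega>s Esub by (simp add: measure_restrict_space)
      also have "\<dots> \<le> measure M {x \<in> space M. real k \<le> norm (Dz n x)^2}"
      proof (rule fm.finite_measure_mono)
        show "{x \<in> space M. real k \<le> norm (Dz n x)^2} \<in> sets M" by measurable
        show "E \<subseteq> {x \<in> space M. real k \<le> norm (Dz n x)^2}"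
        proof
          fix x assume x: "x \<in> E"
          then have a: "real k < norm (Dz n x)" "x \<in> \<Omega>" unfolding E_def by auto
          have "norm (Dz n x) * 1 \<le> norm (Dz n x) * norm (Dz n x)"
            using a kge by (intro mult_left_mono) auto
          then show "x \<in> {x \<in> space M. real k \<le> norm (Dz n x)^2}"
            using a spM by (simp add: power2_eq_square)
        qed
      qed
      also have "\<dots> \<le> (\<integral>x. norm (Dz n x)^2 \<partial>M) / real k"
        using kge by (intro integral_Markov_inequality_measure[OF Vint sets.top]) auto
      also have "\<dots> \<le> C / real k" using Vbdd[of n] kge by (intro divide_right_mono) auto
      also have "\<dots> < \<delta>" using k1' \<delta> kge by (simp add: field_simps)
      finally have mE: "measure lebesgue E < \<delta>" .
      have "(\<integral>x. \<bar>norm (Dz n x) ^ 2\<bar> \<partial>leb_on E) < e" by (rule h\<delta>[OF El Esub mE])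
      moreover have "(\<integral>x. \<bar>norm (Dz n x) ^ 2\<bar> \<partial>leb_on E)
          = (\<integral>x. (if real k < norm (Dz n x) then norm (Dz n x)^2 else 0) \<partial>M)"
      proof -
        have "(\<integral>x. \<bar>norm (Dz n x) ^ 2\<bar> \<partial>leb_on E) = (\<integral>x. indicator E x *\<^sub>R \<bar>norm (Dz n x) ^ 2\<bar> \<partial>lebesgue)"
          using El by (intro integral_restrict_space) simp
        also have "\<dots> = (\<integral>x. indicator \<Omega> x *\<^sub>R (if real k < norm (Dz n x) then norm (Dz n x)^2 else 0) \<partial>lebesgue)"
          by (intro Bochner_Integration.integral_cong) (auto simp: E_def indicator_def)
        also have "\<dots> = (\<integral>x. (if real k < norm (Dz n x) then norm (Dz n x)^2 else 0) \<partial>M)"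
          unfolding M_def using \<Omega>s by (intro integral_restrict_space[symmetric]) simp
        finally show ?thesis .
      qed
      ultimately show "(\<integral>x. (if real k < norm (Dz n x) then norm (Dz n x)^2 else 0) \<partial>M) < e" by simp
    qed
  qed
  have YM1: "\<And>x. x \<in> \<Omega> \<Longrightarrow> prob_space (\<nu> x) \<and> sets (\<nu> x) = sets borel"
    using YM unfolding generates_YM_def by blast
  have YM2: "\<And>f::real^'d^'m \<Rightarrow> real. continuous_on UNIV f \<Longrightarrow> (f \<longlongrightarrow> 0) at_infinity \<Longrightarrow>
        (\<lambda>x. \<integral>F. f F \<partial>\<nu> x) \<in> borel_measurable M
      \<and> (\<forall>g. integrable M g \<longrightarrow>
          (\<lambda>n. \<integral>x. g x * f (Dz n x) \<partial>M) \<longlonglongrightarrow> (\<integral>x. g x * (\<integral>F. f F \<partial>\<nu> x) \<partial>M))"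
    using YM unfolding generates_YM_def M_def by blast
  interpret Y: ymloc M Dz \<nu> C
  proof (rule ymloc.intro[OF fmM], rule ymloc_axioms.intro)
    show "\<And>n. Dz n \<in> borel_measurable M" by (rule Vmeas)
    show "\<And>n. integrable M (\<lambda>x. norm (Dz n x)^2)" by (rule Vint)
    show "\<And>n. (\<integral>x. norm (Dz n x)^2 \<partial>M) \<le> C" by (rule Vbdd)
    show "\<And>e. e>0 \<Longrightarrow> \<exists>k0::nat. \<forall>k\<ge>k0. \<forall>n.
          (\<integral>x. (if real k < norm (Dz n x) then norm (Dz n x)^2 else 0) \<partial>M) < e" by (rule tail)
    show "\<And>x. x \<in> space M \<Longrightarrow> prob_space (\<nu> x)" using YM1 spM by blast
    show "\<And>x. x \<in> space M \<Longrightarrow> sets (\<nu> x) = sets borel" using YM1 spM by blast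
    show "\<And>f::real^'d^'m \<Rightarrow> real. continuous_on UNIV f \<Longrightarrow> (f \<longlongrightarrow> 0) at_infinity \<Longrightarrow>
          (\<lambda>x. \<integral>F. f F \<partial>\<nu> x) \<in> borel_measurable M" using YM2 by blast
    show "\<And>(f::real^'d^'m \<Rightarrow> real) (g::real^'d\<Rightarrow>real). continuous_on UNIV f \<Longrightarrow> (f \<longlongrightarrow> 0) at_infinity \<Longrightarrow> integrable M g \<Longrightarrow>
          (\<lambda>n. \<integral>x. g x * f (Dz n x) \<partial>M) \<longlonglongrightarrow> (\<integral>x. g x * (\<integral>F. f F \<partial>\<nu> x) \<partial>M)" using YM2 by blast
  qed
  obtain Ca where Ca: "\<And>n. AE x in M. norm (\<alpha> n *\<^sub>R Dz n x) \<le> Ca"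
    using \<alpha>_Linfty unfolding M_def by blast
  define Ca' where "Ca' = \<bar>Ca\<bar>"
  have Ca'0: "Ca' \<ge> 0" unfolding Ca'_def by simp
  have Ca': "AE x in M. norm (\<alpha> n *\<^sub>R Dz n x) \<le> Ca'" for n
    using Ca[of n] unfolding Ca'_def by eventually_elim auto
  define K0 where "K0 = closure \<Omega> \<times> cball (0::real^'d^'m) Ca'"
  have K0c: "compact K0" unfolding K0_def using bd by (intro compact_Times) auto
  have UK: "continuous_on K0 (\<lambda>(x, G). U x G)"
    by (rule continuous_on_subset[OF U_cont]) (auto simp: K0_def)
  have inK0: "(x, G) \<in> K0" if "x \<in> \<Omega>" "norm G \<le> Ca'" for x G
    using that closure_subset unfolding K0_def by auto
  have "bounded ((\<lambda>(x, G). U x G) ` K0)"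
    by (rule compact_imp_bounded[OF compact_continuous_image[OF UK K0c]])
  then obtain B where B0: "\<forall>y\<in>(\<lambda>(x, G). U x G) ` K0. norm y \<le> B" unfolding bounded_iff by blast
  have B: "\<bar>U x G\<bar> \<le> B" if "x \<in> \<Omega>" "norm G \<le> Ca'" for x G
    using B0 inK0[OF that] by force
  obtain x0 where x0: "x0 \<in> \<Omega>" using ne by blast
  have Bnn: "B \<ge> 0" using B[OF x0, of 0] Ca'0 by simp
  have uc: "uniformly_continuous_on K0 (\<lambda>(x, G). U x G)"
    by (rule compact_uniformly_continuous[OF UK K0c])
  have UO: "continuous_on (\<Omega> \<times> UNIV) (\<lambda>(x, G). U x G)"
    by (rule continuous_on_subset[OF U_cont]) (use closure_subset in auto)
  define D where "D n x = U x (\<alpha> n *\<^sub>R Dz n x) - U x 0" for n x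
  have Dm: "D n \<in> borel_measurable M" for n
  proof -
    have Vm: "Dz n \<in> borel_measurable (leb_on \<Omega>)" using Vmeas[of n] unfolding M_def .
    have "(\<lambda>x. \<alpha> n *\<^sub>R Dz n x) \<in> borel_measurable (leb_on \<Omega>)" using Vm by measurable
    then have m1: "(\<lambda>x. U x (\<alpha> n *\<^sub>R Dz n x)) \<in> borel_measurable (leb_on \<Omega>)"
      by (rule meas_comp2[OF \<Omega>s UO])
    have m2: "(\<lambda>x. U x 0) \<in> borel_measurable (leb_on \<Omega>)"
      by (rule meas_comp2[OF \<Omega>s UO, of "\<lambda>x. 0"]) simp
    show ?thesis unfolding D_def M_def using m1 m2 by (rule borel_measurable_diff)
  qed
  have Db: "AE x in M. \<bar>D n x\<bar> \<le> 2 * B" for n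
    using Ca'[of n]
  proof (rule AE_mp, intro AE_I2 impI)
    fix x assume x: "x \<in> space M" and h: "norm (\<alpha> n *\<^sub>R Dz n x) \<le> Ca'"
    have "\<bar>U x (\<alpha> n *\<^sub>R Dz n x)\<bar> \<le> B" using B[OF _ h] x spM by simp
    moreover have "\<bar>U x 0\<bar> \<le> B" using B[of x 0] x spM Ca'0 by simp
    ultimately show "\<bar>D n x\<bar> \<le> 2 * B" unfolding D_def by linarith
  qed
  have Dc: "\<exists>\<eta>>0. \<forall>n. AE x in M. norm (\<alpha> n *\<^sub>R Dz n x) < \<eta> \<longrightarrow> \<bar>D n x\<bar> < \<epsilon>" if \<epsilon>: "\<epsilon> > 0" for \<epsilon>
  proof -
    obtain d where d: "d > 0" and hd: "\<And>p q. p \<in> K0 \<Longrightarrow> q \<in> K0 \<Longrightarrow> dist p q < d \<Longrightarrow>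
        dist ((\<lambda>(x, G). U x G) p) ((\<lambda>(x, G). U x G) q) < \<epsilon>"
      using uc \<epsilon> unfolding uniformly_continuous_on_def by metis
    show ?thesis
    proof (intro exI conjI allI)
      show "d > 0" by (rule d)
      fix n
      show "AE x in M. norm (\<alpha> n *\<^sub>R Dz n x) < d \<longrightarrow> \<bar>D n x\<bar> < \<epsilon>"
        using Ca'[of n]
      proof (rule AE_mp, intro AE_I2 impI)
        fix x assume x: "x \<in> space M" and h: "norm (\<alpha> n *\<^sub>R Dz n x) \<le> Ca'"
          and hl: "norm (\<alpha> n *\<^sub>R Dz n x) < d"
        have p: "(x, \<alpha> n *\<^sub>R Dz n x) \<in> K0" using inK0[OF _ h] x spM by simp
        have q: "(x, 0) \<in> K0" using inK0[of x 0] x spM Ca'0 by simp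
        have "dist (x, \<alpha> n *\<^sub>R Dz n x) (x, 0) = norm (\<alpha> n *\<^sub>R Dz n x)"
          by (simp add: dist_Pair_Pair dist_norm)
        then have "dist (U x (\<alpha> n *\<^sub>R Dz n x)) (U x 0) < \<epsilon>"
          using hd[OF p q] hl by simp
        then show "\<bar>D n x\<bar> < \<epsilon>" unfolding D_def dist_real_def .
      qed
    qed
  qed
  have wc1: "wc M (\<lambda>n x. D n x * norm (Dz n x)^2) (\<lambda>x. 0)"
    by (rule Y.wcB[OF Dm Db _ Dc \<alpha>_lim]) (use Bnn in auto)
  have wN: "wc M (\<lambda>n x. norm (Dz n x)^2) (\<lambda>x. \<integral>F. norm F^2 \<partial>\<nu> x)"
    by (rule Y.wcA[of _ 1]) (auto intro: continuous_intros)
  have U0m: "(\<lambda>x. U x 0) \<in> borel_measurable M"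
    unfolding M_def by (rule meas_comp2[OF \<Omega>s UO, of "\<lambda>x. 0"]) simp
  have U0b: "AE x in M. \<bar>U x 0\<bar> \<le> B"
    using B Ca'0 spM by (intro AE_I2) auto
  have wc2: "wc M (\<lambda>n x. U x 0 * norm (Dz n x)^2) (\<lambda>x. U x 0 * (\<integral>F. norm F^2 \<partial>\<nu> x))"
    by (rule wc_mult[OF wN U0m U0b])
  have "bounded (L ` closure \<Omega>)"
    using bd by (intro compact_imp_bounded compact_continuous_image[OF L_cont]) auto
  then obtain LB where LB: "\<forall>y\<in>L ` closure \<Omega>. norm y \<le> LB" unfolding bounded_iff by blast
  define h where "h a b x = blinfun_apply (L x) a \<bullet> b" for a b :: "real^'d^'m" and x
  define \<phi> where "\<phi> a b F = (F \<bullet> a) * (F \<bullet> b)" for a b F :: "real^'d^'m"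
  have \<phi>c: "continuous_on UNIV (\<phi> a b)" for a b unfolding \<phi>_def by (intro continuous_intros)
  have \<phi>b: "\<bar>\<phi> a b F\<bar> \<le> 1 * norm F ^ 2" if "a \<in> Basis" "b \<in> Basis" for a b F
  proof -
    have "\<bar>F \<bullet> a\<bar> * \<bar>F \<bullet> b\<bar> \<le> norm F * norm F"
      using that by (intro mult_mono Basis_le_norm) auto
    then show ?thesis unfolding \<phi>_def by (simp add: abs_mult power2_eq_square)
  qed
  have hm: "h a b \<in> borel_measurable M" for a b
  proof -
    have "continuous_on \<Omega> L" by (rule continuous_on_subset[OF L_cont closure_subset])
    then have "continuous_on \<Omega> (h a b)" unfolding h_def by (intro continuous_intros)
    then show ?thesis unfolding M_def by (rule continuous_imp_measurable_on_sets_lebesgue[OF _ \<Omega>s])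
  qed
  have hb: "AE x in M. \<bar>h a b x\<bar> \<le> LB" if "a \<in> Basis" "b \<in> Basis" for a b
  proof (rule AE_I2)
    fix x assume x: "x \<in> space M"
    then have "norm (L x) \<le> LB" using LB spM closure_subset by auto
    moreover have "\<bar>h a b x\<bar> \<le> norm (blinfun_apply (L x) a) * norm b"
      unfolding h_def by (rule Cauchy_Schwarz_ineq2)
    moreover have "norm (blinfun_apply (L x) a) \<le> norm (L x) * norm a" by (rule norm_blinfun)
    ultimately show "\<bar>h a b x\<bar> \<le> LB" using that by simp
  qed
  have wc3: "wc M (\<lambda>n x. \<Sum>a\<in>Basis. \<Sum>b\<in>Basis. h a b x * \<phi> a b (Dz n x))
      (\<lambda>x. \<Sum>a\<in>Basis. \<Sum>b\<in>Basis. h a b x * (\<integral>F. \<phi> a b F \<partial>\<nu> x))"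
  proof (intro wc_sum finite_Basis)
    fix a b :: "real^'d^'m" assume a: "a \<in> Basis" and b: "b \<in> Basis"
    have "wc M (\<lambda>n x. \<phi> a b (Dz n x)) (\<lambda>x. \<integral>F. \<phi> a b F \<partial>\<nu> x)"
      by (rule Y.wcA[OF \<phi>c _ \<phi>b[OF a b]]) simp
    then show "wc M (\<lambda>n x. h a b x * \<phi> a b (Dz n x)) (\<lambda>x. h a b x * (\<integral>F. \<phi> a b F \<partial>\<nu> x))"
      by (rule wc_mult[OF _ hm hb[OF a b]])
  qed
  define lim0 where "lim0 x = 0 + U x 0 * (\<integral>F. norm F^2 \<partial>\<nu> x)
      + 1/2 * (\<Sum>a\<in>Basis. \<Sum>b\<in>Basis. h a b x * (\<integral>F. \<phi> a b F \<partial>\<nu> x))" for x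
  have wcall: "wc M (\<lambda>n x. D n x * norm (Dz n x)^2 + U x 0 * norm (Dz n x)^2
      + 1/2 * (\<Sum>a\<in>Basis. \<Sum>b\<in>Basis. h a b x * \<phi> a b (Dz n x))) lim0"
    unfolding lim0_def by (rule wc_add[OF wc_add[OF wc1 wc2] wc_cmult[OF wc3]])
  define tgt where "tgt x = U x 0 * (\<integral>F. (norm F)\<^sup>2 \<partial>\<nu> x)
                  + 1/2 * (\<integral>F. blinfun_apply (L x) F \<bullet> F \<partial>\<nu> x)" for x
  have ae: "AE x in M. lim0 x = tgt x"
    using Y.N_AE_and_int(1)
  proof (rule AE_mp, intro AE_I2 impI)
    fix x assume x: "x \<in> space M" and iN: "integrable (\<nu> x) (\<lambda>F. norm F^2)"
    have i\<phi>: "integrable (\<nu> x) (\<lambda>F. h a b x * \<phi> a b F)" if "a \<in> Basis" "b \<in> Basis" for a b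
    proof -
      have "integrable (\<nu> x) (\<phi> a b)"
        by (rule Bochner_Integration.integrable_bound[OF iN Y.nu_meas[OF x \<phi>c]]) (use \<phi>b[OF that] in auto)
      then show ?thesis by simp
    qed
    have "(\<integral>F. blinfun_apply (L x) F \<bullet> F \<partial>\<nu> x) = (\<integral>F. (\<Sum>a\<in>Basis. \<Sum>b\<in>Basis. h a b x * \<phi> a b F) \<partial>\<nu> x)"
      unfolding h_def \<phi>_def by (subst quad_expand) simp
    also have "\<dots> = (\<Sum>a\<in>Basis. \<Sum>b\<in>Basis. h a b x * (\<integral>F. \<phi> a b F \<partial>\<nu> x))"
      using i\<phi> by (simp add: Bochner_Integration.integral_sum)
    finally have eqL: "(\<integral>F. blinfun_apply (L x) F \<bullet> F \<partial>\<nu> x) = (\<Sum>a\<in>Basis. \<Sum>b\<in>Basis. h a b x * (\<integral>F. \<phi> a b F \<partial>\<nu> x))" .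
    show "lim0 x = tgt x" by (simp only: lim0_def tgt_def eqL add_0_left)
  qed
  have tgtm: "tgt \<in> borel_measurable M"
  proof -
    have "integrable M lim0" using wcall unfolding wc_def by blast
    then have l0: "lim0 \<in> borel_measurable (leb_on \<Omega>)" unfolding M_def by (rule borel_measurable_integrable)
    have a1: "AE x in M. tgt x = lim0 x" using ae by eventually_elim (rule sym)
    have a2: "AE x in leb_on \<Omega>. tgt x = lim0 x" using a1 unfolding M_def .
    have "tgt \<in> borel_measurable (leb_on \<Omega>)" by (rule complete_AE[OF \<Omega>s l0 a2])
    then show ?thesis unfolding M_def .
  qed
  have "wc M (\<lambda>n x. calF U L x (\<alpha> n) (Dz n x)) tgt"
  proof (rule wc_cong[OF wcall _ tgtm ae])
    fix n x
    show "D n x * norm (Dz n x)^2 + U x 0 * norm (Dz n x)^2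
      + 1/2 * (\<Sum>a\<in>Basis. \<Sum>b\<in>Basis. h a b x * \<phi> a b (Dz n x)) = calF U L x (\<alpha> n) (Dz n x)"
      unfolding calF_def D_def h_def \<phi>_def by (subst quad_expand) (simp add: algebra_simps)
  qed
  then have wl: "weak_L1_conv \<Omega> (\<lambda>n x. calF U L x (\<alpha> n) (Dz n x)) tgt"
    unfolding M_def by (rule wc_weak)
  show ?thesis
  proof (intro exI[of _ "\<lambda>n. n"] conjI)
    show "strict_mono (\<lambda>n::nat. n)" by (simp add: strict_mono_def)
    show "weak_L1_conv \<Omega> (\<lambda>n x. calF U L x (\<alpha> n) (Dz n x))
             (\<lambda>x. U x 0 * (\<integral>F. (norm F)\<^sup>2 \<partial>\<nu> x)
                  + 1/2 * (\<integral>F. blinfun_apply (L x) F \<bullet> F \<partial>\<nu> x))"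
      using wl unfolding tgt_def .
  qed
qed

end
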